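(* (Generalized Pigeonhole Principle.) Let $n\geq 1$, $r\geq 0$ and $s$ be integers with $0\leq s<n$. If $rn+s$ or more objects are placed in $n$ boxes, then for each integer $m$ with $1\leq m\leq n$ there exist $m$ boxes which together contain at least $rm+\min(s,m)$ objects. *)

theory Defs
  imports Main
begin

end

theory Submission
  imports Defs
begin

lemma aux:
  fixes c :: "'b \<Rightarrow> nat"
  shows "\<And>B m. finite B \<Longrightarrow> card B = n \<Longrightarrow> (\<Sum>b\<in>B. c b) \<ge> r * n + s \<Longrightarrow> m \<le> n
    \<Longrightarrow> \<exists>M \<subseteq> B. card M = m \<and> (\<Sum>b\<in>M. c b) \<ge> r * m + min s m"
proof (induction n)
  case 0
  then show ?case by (intro exI[of _ "{}"]) auto
next
  case (Suc n)
  show ?case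
  proof (cases "m = Suc n")
    case True
    then show ?thesis using Suc.prems by (intro exI[of _ B]) auto
  next
    case False
    hence mn: "m \<le> n" using Suc.prems by auto
    have ne: "B \<noteq> {}" using Suc.prems by auto
    obtain x where x: "x \<in> B" "\<forall>y\<in>B. c x \<le> c y"
      using ex_min_if_finite[of "c ` B"] Suc.prems(1) ne
      by (metis (no_types, lifting) arg_min_if_finite(1) arg_min_least)
    show ?thesis
    proof (cases "c x \<le> r")
      case True
      have "(\<Sum>b\<in>B. c b) = c x + (\<Sum>b\<in>B - {x}. c b)"
        using Suc.prems(1) x(1) by (simp add: sum.remove)
      hence "(\<Sum>b\<in>B - {x}. c b) \<ge> r * n + s" using Suc.prems(3) True by simp
      moreover have "card (B - {x}) = n" using Suc.prems x by simp
      ultimately obtain M where "M \<subseteq> B - {x}" "card M = m" "(\<Sum>b\<in>M. c b) \<ge> r * m + min s m"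
        using Suc.IH[of "B - {x}" m] Suc.prems(1) mn by auto
      then show ?thesis by blast
    next
      case False
      obtain M where M: "M \<subseteq> B" "card M = m"
        using obtain_subset_with_card_n[of m B] Suc.prems mn by auto
      have "(\<Sum>b\<in>M. (r+1)) \<le> (\<Sum>b\<in>M. c b)"
        by (rule sum_mono) (use x False M in force)
      hence "m * (r+1) \<le> (\<Sum>b\<in>M. c b)" using M by simp
      hence "r * m + min s m \<le> (\<Sum>b\<in>M. c b)" by (simp add: algebra_simps)
      then show ?thesis using M by blast
    qed
  qed
qed

theorem theorem2:
  fixes B :: "'b set" and c :: "'b \<Rightarrow> nat" and n r s m :: nat
  assumes "finite B" and "card B = n" and "n \<ge> 1"
    and "s < n"
    and "(\<Sum>b\<in>B. c b) \<ge> r * n + s"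
    and "1 \<le> m" and "m \<le> n"
  shows "\<exists>M \<subseteq> B. card M = m \<and> (\<Sum>b\<in>M. c b) \<ge> r * m + min s m"
  using aux[of B n r s c m] assms by blast

end
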